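(* Assume $\theta_i<1$ for all $i$ and $\theta_j>0$ for some $j$. Suppose $\mathcal G(C)$ is a star topology with center node $l$ and $0<\theta_l<1$. Then: (i) every equilibrium social power $x^*$ of systems (A) and (B) satisfies: (a) $x^*\in\operatorname{int}\Delta_n$; (b) for $i\in\mathcal V_f$: if $C_{li}=0$ then $x^*_i=1/n$, otherwise $x^*_i>1/n$; (c) for $i\in\mathcal V_p\setminus\{l\}$ with $C_{li}=0$: $x^*_i=\dfrac{n-\sqrt{n^2-4n\theta_i(1-\theta_i)}}{2n\theta_i}$ (in particular $x^*_i$ is the same for all equilibria), and this value is strictly decreasing in $\theta_i$. (ii) If moreover $C_{li}=0$ for all $i\in\mathcal V_p\setminus\{l\}$, then the equilibrium social power is unique and satisfies: (a) $x^*_i=\dfrac{n-\sqrt{n^2-4n\theta_i(1-\theta_i)}}{2n\theta_i}$, strictly decreasing in $\theta_i$, for $i\in\mathcal V_p\setminus\{l\}$; (b) $x^*_l=\dfrac{n-\sqrt{n^2-4n\theta_l(1-\theta_l)\xi^*}}{2n\theta_l}$; (c) $x^*_i=\dfrac1n+\Big(\dfrac{\xi^*}{n}-x^*_l\Big)C_{li}$ for $i\in\mathcal V_f$; where $\xi^*=n-r-n\sum_{j\in\mathcal V_p\setminus\{l\}}x^*_j$ and $r=|\mathcal V_f|$.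
   Context: Let $n\ge 2$, $\mathbf 1_n$ the all-ones vector, $I_n$ the identity matrix, $\Delta_n=\{x\in\mathbb R^n: x\ge 0,\ \mathbf 1_n^Tx=1\}$, $\operatorname{int}\Delta_n=\{x\in\mathbb R^n: x>0,\ \mathbf 1_n^Tx=1\}$. Let $C\in\mathbb R^{n\times n}$ be a nonnegative row-stochastic matrix with zero diagonal, and $\mathcal G(C)$ the digraph on $\{1,\dots,n\}$ with an edge $(i,j)$ iff $C_{ij}>0$. $\mathcal G(C)$ is a star topology with center node $l$ if every edge of $\mathcal G(C)$ is either from $l$ or to $l$ (i.e. $C_{ij}>0$ implies $i=l$ or $j=l$). Let $\theta=(\theta_1,\dots,\theta_n)\in[0,1]^n$, $\Theta=\mathrm{diag}(\theta)$, $W(x)=\mathrm{diag}(x)+(I_n-\mathrm{diag}(x))C$. Let $\mathcal V_f=\{i:\theta_i=0\}$ and $\mathcal V_p=\{i:\theta_i>0\}$. System (A): $x(s+1)=F(x(s))$, $x(0)\in\Delta_n$, where $F(x)=(I_n-\Theta)(I_n-W(x)^T\Theta)^{-1}\mathbf 1_n/n$; an equilibrium is $x^*\in\Delta_n$ with $F(x^* )=x^*$. System (B): $V(k+1)=\Theta W(x(k))V(k)+I_n-\Theta$, $x(k+1)=V(k+1)^T\mathbf 1_n/n$, with $V(0)=I_n$, $x(0)\in\Delta_n$; an equilibrium is a pair $(V^*,x^* )$ with $V^*$ row-stochastic, $x^*\in\Delta_n$, $V^*=\Theta W(x^* )V^*+I_n-\Theta$, $x^*=(V^* )^T\mathbf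 1_n/n$. The equilibrium social powers of (A) and (B) coincide (the fixed points of $F$). *)

theory Defs
  imports "HOL-Analysis.Analysis"
begin

definition prob_simplex :: "real^'n \<Rightarrow> bool" where
  "prob_simplex x \<longleftrightarrow> (\<forall>i. x$i \<ge> 0) \<and> (\<Sum>i\<in>UNIV. x$i) = 1"

definition int_prob_simplex :: "real^'n \<Rightarrow> bool" where
  "int_prob_simplex x \<longleftrightarrow> (\<forall>i. x$i > 0) \<and> (\<Sum>i\<in>UNIV. x$i) = 1"

definition row_stochastic :: "real^'n^'n \<Rightarrow> bool" where
  "row_stochastic A \<longleftrightarrow> (\<forall>i j. A$i$j \<ge> 0) \<and> (\<forall>i. (\<Sum>j\<in>UNIV. A$i$j) = 1)"

definition diagm :: "real^'n \<Rightarrow> real^'n^'n" where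
  "diagm v = (\<chi> i j. if i = j then v$i else 0)"

definition onesn :: "real^'n" where
  "onesn = (\<chi> i. 1)"

definition Wmat :: "real^'n^'n \<Rightarrow> real^'n \<Rightarrow> real^'n^'n" where
  "Wmat C x = diagm x + (mat 1 - diagm x) ** C"

definition Fmap :: "real^'n \<Rightarrow> real^'n^'n \<Rightarrow> real^'n \<Rightarrow> real^'n" where
  "Fmap \<theta> C x = ((mat 1 - diagm \<theta>) ** matrix_inv (mat 1 - transpose (Wmat C x) ** diagm \<theta>))
                  *v ((1 / real CARD('n)) *\<^sub>R onesn)"

definition equilibrium_A :: "real^'n \<Rightarrow> real^'n^'n \<Rightarrow> real^'n \<Rightarrow> bool" where
  "equilibrium_A \<theta> C x \<longleftrightarrow> prob_simplex x \<and> Fmap \<theta> C x = x"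

definition equilibrium_B :: "real^'n \<Rightarrow> real^'n^'n \<Rightarrow> real^'n^'n \<Rightarrow> real^'n \<Rightarrow> bool" where
  "equilibrium_B \<theta> C V x \<longleftrightarrow> row_stochastic V \<and> prob_simplex x \<and>
     V = diagm \<theta> ** Wmat C x ** V + (mat 1 - diagm \<theta>) \<and>
     x = transpose V *v ((1 / real CARD('n)) *\<^sub>R onesn)"

definition star_topology :: "real^'n^'n \<Rightarrow> 'n \<Rightarrow> bool" where
  "star_topology C l \<longleftrightarrow> (\<forall>i j. C$i$j > 0 \<longrightarrow> i = l \<or> j = l)"

definition powval :: "real \<Rightarrow> real \<Rightarrow> real \<Rightarrow> real" where
  "powval n c t = (n - sqrt (n^2 - 4 * n * t * (1 - t) * c)) / (2 * n * t)"

end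

theory Submission
  imports Defs
begin

lemma root_powval:
  fixes n c t x :: real
  assumes t0: "0 < t" and t1: "t < 1" and n0: "0 < n" and x1: "x \<le> 1" and cn: "c < n"
    and eq: "t*x^2 - x + (1-t)*c/n = 0"
  shows "x = powval n c t"
proof -
  have h: "n*t*x^2 - n*x + (1-t)*c = 0"
  proof -
    have "n * (t*x^2 - x + (1-t)*c/n) = 0" using eq by simp
    moreover have "n * (t*x^2 - x + (1-t)*c/n) = n*t*x^2 - n*x + (1-t)*c" using n0 by (simp add: field_simps)
    ultimately show ?thesis by simp
  qed
  have sq: "(n - 2*n*t*x)^2 = n^2 - 4*n*t*(1-t)*c"
  proof -
    have "(n - 2*n*t*x)^2 = n^2 + 4*n*t*(n*t*x^2 - n*x)" by (simp add: power2_eq_square algebra_simps)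
    also have "n*t*x^2 - n*x = -((1-t)*c)" using h by linarith
    finally show ?thesis by (simp add: algebra_simps)
  qed
  have le: "2*t*x \<le> 1"
  proof (rule ccontr)
    assume "\<not> 2*t*x \<le> 1"
    then have s0: "0 < 2*t*x - 1" by simp
    have s1: "2*t*x - 1 \<le> 2*t - 1" using x1 t0 by simp
    have "(2*t*x - 1)^2 \<le> (2*t - 1)^2" using s0 s1 by (intro power_mono) auto
    then have "n*(2*t*x - 1)^2 \<le> n*(2*t - 1)^2" using n0 by (simp add: mult_left_mono)
    moreover have "n*(2*t*x - 1)^2 = n - 4*t*(1-t)*c"
    proof -
      have "n*(2*t*x - 1)^2 = 4*t*(n*t*x^2 - n*x) + n" by (simp add: power2_eq_square algebra_simps)
      also have "n*t*x^2 - n*x = -((1-t)*c)" using h by linarith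
      finally show ?thesis by (simp add: algebra_simps)
    qed
    ultimately have "4*(t*(1-t))*(n - c) \<le> 0" by (simp add: power2_eq_square algebra_simps)
    moreover have "0 < 4*(t*(1-t))*(n - c)" using t0 t1 cn by simp
    ultimately show False by simp
  qed
  have "sqrt (n^2 - 4*n*t*(1-t)*c) = n - 2*n*t*x"
    using sq le n0 by (metis real_sqrt_abs abs_of_nonneg diff_ge_0_iff_ge mult.assoc mult.commute mult_left_le mult_le_cancel_left1 less_eq_real_def)
  then show ?thesis using t0 n0 by (simp add: powval_def field_simps)
qed

lemma powval_props:
  fixes n c t :: real
  assumes t0: "0 < t" and t1: "t < 1" and n0: "0 < n" and c0: "0 \<le> c" and cn: "c \<le> n"
  shows "t*(powval n c t)^2 - powval n c t + (1-t)*c/n = 0 \<and> 0 \<le> powval n c t \<and> powval n c t \<le> 1"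
proof -
  define D where "D = n^2 - 4*n*t*(1-t)*c"
  have tt: "4*t*(1-t) \<le> 1" 
  proof -
    have "(2*t-1)^2 \<ge> 0" by simp
    then show ?thesis by (simp add: power2_eq_square algebra_simps)
  qed
  have D0: "0 \<le> D"
  proof -
    have "4*n*t*(1-t)*c = n*c*(4*t*(1-t))" by simp
    also have "\<dots> \<le> n*c" using tt n0 c0 by (simp add: mult_left_le)
    also have "\<dots> \<le> n*n" using cn n0 by simp
    finally show ?thesis by (simp add: D_def power2_eq_square)
  qed
  define s where "s = sqrt D"
  have s2: "s^2 = D" using D0 by (simp add: s_def)
  have s0: "0 \<le> s" using D0 by (simp add: s_def)
  have sn: "s \<le> n"
  proof -
    have "0 \<le> 4*n*t*(1-t)*c" using t0 t1 n0 c0 by simp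
    then have "D \<le> n^2" by (simp add: D_def)
    then have "s \<le> sqrt (n^2)" unfolding s_def by (rule real_sqrt_le_mono)
    then show ?thesis using n0 by simp
  qed
  have q: "powval n c t = (n - s)/(2*n*t)" by (simp add: powval_def s_def D_def)
  have eq: "t*((n - s)/(2*n*t))^2 - (n - s)/(2*n*t) + (1-t)*c/n = 0"
  proof -
    have "t*((n - s)/(2*n*t))^2 - (n - s)/(2*n*t) + (1-t)*c/n
        = ((n-s)^2 - 2*n*(n-s) + 4*n*t*(1-t)*c) / (4*n^2*t)"
      using t0 n0 by (simp add: field_simps power2_eq_square)
    also have "(n-s)^2 - 2*n*(n-s) + 4*n*t*(1-t)*c = s^2 - D" by (simp add: D_def power2_eq_square algebra_simps)
    finally show ?thesis using s2 by simp
  qed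
  have ge: "0 \<le> (n - s)/(2*n*t)" using sn t0 n0 by simp
  have le1: "(n - s)/(2*n*t) \<le> 1"
  proof -
    have "(n*(1-2*t))^2 \<le> D"
    proof -
      have "(n*(1-2*t))^2 = n^2 - 4*n*t*(1-t)*n" by (simp add: power2_eq_square algebra_simps)
      moreover have "4*n*t*(1-t)*c \<le> 4*n*t*(1-t)*n" using cn t0 t1 n0 by (simp add: mult_left_mono)
      ultimately show ?thesis by (simp add: D_def)
    qed
    then have "n*(1-2*t) \<le> s" unfolding s_def by (rule real_le_rsqrt)
    then have "n - s \<le> 2*n*t" by (simp add: algebra_simps)
    then show ?thesis using t0 n0 by simp
  qed
  show ?thesis using q eq ge le1 by simp
qed

lemma powval_mono:
  fixes n a b :: real
  assumes n2: "2 \<le> n" and a0: "0 < a" and ab: "a < b" and b1: "b < 1"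
  shows "powval n 1 b < powval n 1 a"
proof (rule ccontr)
  assume "\<not> ?thesis"
  then have le: "powval n 1 a \<le> powval n 1 b" by simp
  define qa where "qa = powval n 1 a"
  define qb where "qb = powval n 1 b"
  define e where "e = 1 / n"
  have e0: "0 < e" and e2: "e \<le> 1/2" using n2 by (auto simp: e_def field_simps)
  have pa: "a*qa^2 - qa + (1-a)*e = 0" "0 \<le> qa" "qa \<le> 1"
    using powval_props[of a n 1] a0 ab b1 n2 by (auto simp: qa_def e_def)
  have pb: "b*qb^2 - qb + (1-b)*e = 0" "0 \<le> qb" "qb \<le> 1"
    using powval_props[of b n 1] a0 ab b1 n2 by (auto simp: qb_def e_def)
  have qab: "qa \<le> qb" using le by (simp add: qa_def qb_def)
  have qae: "qa \<le> e"
  proof -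
    have "qa*(1 - a*qa) = (1-a)*e" using pa(1) by (simp add: power2_eq_square algebra_simps)
    moreover have "1 - a*qa \<ge> 1 - a" using pa(3) a0 by (simp add: mult_left_le)
    ultimately have "qa*(1-a) \<le> (1-a)*e" using pa(2) by (metis mult_left_mono)
    then show ?thesis using ab b1 by (simp add: mult.commute)
  qed
  have qbe: "qb \<le> e"
  proof -
    have "qb*(1 - b*qb) = (1-b)*e" using pb(1) by (simp add: power2_eq_square algebra_simps)
    moreover have "1 - b*qb \<ge> 1 - b" using pb(3) a0 ab by (simp add: mult_left_le)
    ultimately have "qb*(1-b) \<le> (1-b)*e" using pb(2) by (metis mult_left_mono)
    then show ?thesis using ab b1 by (simp add: mult.commute)
  qed
  define Da where "Da = e - qa^2"
  define Db where "Db = e - qb^2"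
  have Da0: "0 < Da"
  proof -
    have "qa^2 \<le> e^2" using pa(2) qae by (simp add: power_mono)
    also have "e^2 < e" using e0 e2 by (simp add: power2_eq_square)
    finally show ?thesis by (simp add: Da_def)
  qed
  have Db0: "0 < Db"
  proof -
    have "qb^2 \<le> e^2" using pb(2) qbe by (simp add: power_mono)
    also have "e^2 < e" using e0 e2 by (simp add: power2_eq_square)
    finally show ?thesis by (simp add: Db_def)
  qed
  have ea: "a*Da = e - qa" using pa(1) by (simp add: Da_def algebra_simps)
  have eb: "b*Db = e - qb" using pb(1) by (simp add: Db_def algebra_simps)
  have key: "(e - qa)*Db - (e - qb)*Da = (qb - qa)*((qa - e)*(qb - e) + e - e^2)"
    by (simp add: Da_def Db_def power2_eq_square algebra_simps)
  have "0 \<le> (qb - qa)*((qa - e)*(qb - e) + e - e^2)"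
  proof -
    have "0 \<le> (qa - e)*(qb - e)" using qae qbe by (simp add: mult_nonpos_nonpos)
    moreover have "0 \<le> e - e^2" using e0 e2 by (simp add: power2_eq_square)
    ultimately show ?thesis using qab by simp
  qed
  moreover have "a*Da*Db = (e-qa)*Db" using ea by simp
  moreover have "b*Db*Da = (e-qb)*Da" using eb by simp
  ultimately have "b*Db*Da \<le> a*Da*Db" using key by linarith
  then have "b*(Da*Db) \<le> a*(Da*Db)" by (simp add: algebra_simps)
  then have "b \<le> a" using Da0 Db0 by simp
  then show False using ab by simp
qed



lemma diagm_mul: "(diagm d ** B) $ i $ j = d$i * B$i$j"
  by (simp add: diagm_def matrix_matrix_mult_def if_distrib if_distribR sum.delta cong: if_cong)

lemma mul_diagm: "(B ** diagm d) $ i $ j = B$i$j * d$j"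
  by (simp add: diagm_def matrix_matrix_mult_def if_distrib if_distribR sum.delta' cong: if_cong)

lemma diagm_vec: "(diagm d *v v) $ i = d$i * v$i"
  by (simp add: diagm_def matrix_vector_mult_def if_distrib if_distribR sum.delta cong: if_cong)

lemma mat1_entry: "(mat 1 :: real^'n^'n) $ i $ j = (if i = j then 1 else 0)"
  by (simp add: mat_def)

lemma transpose_entry: "transpose A $ i $ j = A $ j $ i"
  by (simp add: transpose_def)

lemma Wmat_entry: "Wmat C x $ i $ j = (if i = j then x$i else 0) + (1 - x$i) * C$i$j"
proof -
  have "((mat 1 - diagm x) ** C) $ i $ j = (1 - x$i) * C$i$j"
    by (simp add: diagm_def mat_def matrix_matrix_mult_def if_distrib if_distribR sum.delta cong: if_cong)
  then show ?thesis by (simp add: Wmat_def diagm_def)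
qed

lemma IminusD_vec: "((mat 1 - diagm d) *v v) $ i = (1 - d$i) * v$i"
  by (simp add: diagm_def mat_def matrix_vector_mult_def if_distrib if_distribR sum.delta cong: if_cong)

lemma Mv_entry: "((mat 1 - transpose W ** diagm d) *v y) $ j = y$j - (\<Sum>i\<in>UNIV. W$i$j * d$i * y$i)"
proof -
  have "((mat 1 - transpose W ** diagm d) *v y) $ j = (\<Sum>i\<in>UNIV. ((if j = i then 1 else 0) - W$i$j * d$i) * y$i)"
    by (simp add: matrix_vector_mult_def mul_diagm transpose_entry mat1_entry)
  also have "\<dots> = (\<Sum>i\<in>UNIV. (if j = i then y$i else 0)) - (\<Sum>i\<in>UNIV. W$i$j * d$i * y$i)"
    unfolding sum_subtractf[symmetric] by (rule sum.cong) (auto simp: algebra_simps)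
  finally show ?thesis by simp
qed

locale starsys =
  fixes th :: "real^'n" and C :: "real^'n^'n" and l :: 'n
  assumes n2: "CARD('n) \<ge> 2" and Cst: "row_stochastic C" and Cd: "\<forall>i. C$i$i = 0"
    and thr: "\<forall>i. 0 \<le> th$i \<and> th$i < 1" and star: "star_topology C l" and thl: "0 < th$l"
begin

lemma C_nonneg: "C$i$j \<ge> 0" using Cst by (simp add: row_stochastic_def)
lemma C_rowsum: "(\<Sum>j\<in>UNIV. C$i$j) = 1" using Cst by (simp add: row_stochastic_def)

lemma C_nonl: assumes "i \<noteq> l" shows "C$i$j = (if j = l then 1 else 0)"
proof -
  have z: "C$i$k = 0" if "k \<noteq> l" for k
    using star assms that C_nonneg[of i k] by (force simp: star_topology_def)
  have "(\<Sum>k\<in>UNIV. C$i$k) = C$i$l + (\<Sum>k\<in>UNIV-{l}. C$i$k)"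
    by (simp add: sum.remove)
  also have "(\<Sum>k\<in>UNIV-{l}. C$i$k) = 0" using z by (intro sum.neutral) auto
  finally have "C$i$l = 1" using C_rowsum[of i] by simp
  then show ?thesis using z by auto
qed

lemma th_ge0: "0 \<le> th$i" using thr by auto
lemma th_lt1: "th$i < 1" using thr by auto
lemma th_ne1: "1 - th$i \<noteq> 0" "th$i \<noteq> 1" using th_lt1[of i] by auto

lemma sumW: "(\<Sum>i\<in>UNIV. Wmat C x $i$j * d$i * y$i) = x$j*d$j*y$j +
   (if j = l then (\<Sum>i\<in>UNIV-{l}. (1-x$i)*d$i*y$i) else (1-x$l)*C$l$j*d$l*y$l)"
proof -
  have "(\<Sum>i\<in>UNIV. Wmat C x $i$j * d$i * y$i) = (\<Sum>i\<in>UNIV. (if i = j then x$i*d$i*y$i else 0)) + (\<Sum>i\<in>UNIV. (1-x$i)*C$i$j*d$i*y$i)"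
    unfolding sum.distrib[symmetric] by (rule sum.cong) (auto simp: Wmat_entry algebra_simps)
  also have "(\<Sum>i\<in>UNIV. (if i = j then x$i*d$i*y$i else 0)) = x$j*d$j*y$j" by simp
  also have "(\<Sum>i\<in>UNIV. (1-x$i)*C$i$j*d$i*y$i) = (1-x$l)*C$l$j*d$l*y$l + (\<Sum>i\<in>UNIV-{l}. (1-x$i)*C$i$j*d$i*y$i)"
    by (simp add: sum.remove)
  also have "(\<Sum>i\<in>UNIV-{l}. (1-x$i)*C$i$j*d$i*y$i) = (if j = l then (\<Sum>i\<in>UNIV-{l}. (1-x$i)*d$i*y$i) else 0)"
    by (auto simp: C_nonl intro!: sum.cong)
  finally show ?thesis using Cd by auto
qed

lemma W_nonneg: assumes "\<forall>i. 0 \<le> x$i \<and> x$i \<le> 1" shows "Wmat C x $i$j \<ge> 0"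
  using assms C_nonneg[of i j] by (simp add: Wmat_entry)

lemma W_rowsum: "(\<Sum>j\<in>UNIV. Wmat C x $i$j) = 1"
proof -
  have "(\<Sum>j\<in>UNIV. Wmat C x $i$j) = (\<Sum>j\<in>UNIV. (if i = j then x$i else 0)) + (1 - x$i) * (\<Sum>j\<in>UNIV. C$i$j)"
    by (simp add: Wmat_entry sum.distrib sum_distrib_left)
  then show ?thesis by (simp add: C_rowsum)
qed

definition Am :: "real^'n \<Rightarrow> real^'n^'n" where "Am x = mat 1 - diagm th ** Wmat C x"
definition Mm :: "real^'n \<Rightarrow> real^'n^'n" where "Mm x = mat 1 - transpose (Wmat C x) ** diagm th"
definition cvec :: "real^'n" where "cvec = (1 / real CARD('n)) *\<^sub>R onesn"

lemma Fmap_eq: "Fmap th C x = ((mat 1 - diagm th) ** matrix_inv (Mm x)) *v cvec"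
  by (simp add: Fmap_def Mm_def cvec_def)

lemma Am_vec: "(Am x *v v) $ i = v$i - th$i * (\<Sum>k\<in>UNIV. Wmat C x $i$k * v$k)"
proof -
  have "(Am x *v v) $ i = (\<Sum>k\<in>UNIV. ((if i = k then 1 else 0) - th$i * Wmat C x $i$k) * v$k)"
    by (simp add: Am_def matrix_vector_mult_def diagm_mul mat1_entry)
  also have "\<dots> = (\<Sum>k\<in>UNIV. (if i = k then v$k else 0)) - th$i * (\<Sum>k\<in>UNIV. Wmat C x $i$k * v$k)"
    unfolding sum_distrib_left sum_subtractf[symmetric] by (rule sum.cong) (auto simp: algebra_simps)
  finally show ?thesis by simp
qed

lemma Am_inj: assumes x01: "\<forall>i. 0 \<le> x$i \<and> x$i \<le> 1" and z: "Am x *v v = 0" shows "v = 0"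
proof -
  define f where "f k = \<bar>v$k\<bar>" for k
  have "Max (range f) \<in> range f" by (rule Max_in) auto
  then obtain i where i: "f i = Max (range f)" by (metis rangeE)
  have mx: "f k \<le> f i" for k using i by (simp add: Max_ge)
  have vi: "v$i = th$i * (\<Sum>k\<in>UNIV. Wmat C x $i$k * v$k)"
    using arg_cong[OF z, of "\<lambda>w. w$i"] by (simp add: Am_vec)
  have "\<bar>\<Sum>k\<in>UNIV. Wmat C x $i$k * v$k\<bar> \<le> (\<Sum>k\<in>UNIV. \<bar>Wmat C x $i$k * v$k\<bar>)"
    by (rule sum_abs)
  also have "\<dots> = (\<Sum>k\<in>UNIV. Wmat C x $i$k * f k)"
    using W_nonneg[OF x01] by (simp add: abs_mult f_def)
  also have "\<dots> \<le> (\<Sum>k\<in>UNIV. Wmat C x $i$k * f i)"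
    by (rule sum_mono) (simp add: mult_left_mono mx W_nonneg[OF x01])
  also have "\<dots> = f i" by (simp add: sum_distrib_right[symmetric] W_rowsum)
  finally have le: "\<bar>\<Sum>k\<in>UNIV. Wmat C x $i$k * v$k\<bar> \<le> f i" .
  have "f i = th$i * \<bar>\<Sum>k\<in>UNIV. Wmat C x $i$k * v$k\<bar>"
    using vi th_ge0[of i] by (simp add: f_def abs_mult)
  also have "\<dots> \<le> th$i * f i" using le th_ge0[of i] by (simp add: mult_left_mono)
  finally have "(1 - th$i) * f i \<le> 0" by (simp add: algebra_simps)
  moreover have "f i \<ge> 0" by (simp add: f_def)
  ultimately have "f i = 0" using th_lt1[of i] by (smt (verit) mult_pos_pos)
  then have "f k = 0" for k using mx[of k] by (simp add: f_def)
  then show ?thesis by (simp add: f_def vec_eq_iff)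
qed

lemma Am_invertible: assumes "\<forall>i. 0 \<le> x$i \<and> x$i \<le> 1" shows "invertible (Am x)"
  using Am_inj[OF assms] by (simp add: invertible_left_inverse matrix_left_invertible_ker)

lemma Mm_transpose: "Mm x = transpose (Am x)"
  by (simp add: Mm_def Am_def vec_eq_iff transpose_entry diagm_mul mul_diagm mat1_entry)

lemma Mm_invertible: assumes "\<forall>i. 0 \<le> x$i \<and> x$i \<le> 1" shows "invertible (Mm x)"
  using Am_invertible[OF assms] by (simp add: Mm_transpose transpose_invertible)

lemma matrix_inv_props: assumes "invertible (A::real^'n^'n)"
  shows "A ** matrix_inv A = mat 1 \<and> matrix_inv A ** A = mat 1"
  using assms unfolding invertible_def matrix_inv_def by (rule someI_ex)

lemma transpose_ID: "transpose (mat 1 - diagm th) = mat 1 - diagm th"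
  by (simp add: vec_eq_iff transpose_entry diagm_def mat1_entry)

lemma key_V: assumes x01: "\<forall>i. 0 \<le> x$i \<and> x$i \<le> 1" and AV: "Am x ** V = mat 1 - diagm th"
  shows "transpose V = (mat 1 - diagm th) ** matrix_inv (Mm x)"
proof -
  have "transpose V ** Mm x = mat 1 - diagm th"
    by (simp add: Mm_transpose matrix_transpose_mul[symmetric] AV transpose_ID)
  then have "transpose V ** Mm x ** matrix_inv (Mm x) = (mat 1 - diagm th) ** matrix_inv (Mm x)" by simp
  then show ?thesis using matrix_inv_props[OF Mm_invertible[OF x01]] by (simp add: matrix_mul_assoc[symmetric])
qed

lemma mat_diff_mul: "(A - B) ** (V::real^'n^'n) = A ** V - B ** V"
  by (simp add: matrix_matrix_mult_def vec_eq_iff sum_subtractf left_diff_distrib)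

lemma simplex_01: "prob_simplex x \<Longrightarrow> \<forall>i. 0 \<le> x$i \<and> x$i \<le> 1"
proof (intro allI conjI)
  fix i assume p: "prob_simplex x"
  then show "0 \<le> x$i" by (simp add: prob_simplex_def)
  have "x$i \<le> (\<Sum>k\<in>UNIV. x$k)" using p by (intro member_le_sum) (auto simp: prob_simplex_def)
  then show "x$i \<le> 1" using p by (simp add: prob_simplex_def)
qed

lemma B_to_A: assumes "equilibrium_B th C V x" shows "equilibrium_A th C x"
proof -
  have p: "prob_simplex x" using assms unfolding equilibrium_B_def by blast
  note x01 = simplex_01[OF p]
  have Veq: "V = diagm th ** Wmat C x ** V + (mat 1 - diagm th)" and xe: "x = transpose V *v cvec"
    using assms unfolding equilibrium_B_def cvec_def by blast+
  have "Am x ** V = V - diagm th ** Wmat C x ** V"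
    by (simp add: Am_def mat_diff_mul matrix_mul_assoc)
  also have "\<dots> = mat 1 - diagm th" using Veq by (metis add_diff_cancel_left')
  finally have "Am x ** V = mat 1 - diagm th" .
  from key_V[OF x01 this] xe have "x = ((mat 1 - diagm th) ** matrix_inv (Mm x)) *v cvec" by metis
  then have "x = Fmap th C x" by (simp add: Fmap_eq)
  with p show ?thesis by (simp add: equilibrium_A_def)
qed

definition yv :: "real^'n \<Rightarrow> real^'n" where "yv x = (\<chi> j. x$j / (1 - th$j))"
definition Lhs :: "real^'n \<Rightarrow> 'n \<Rightarrow> real" where "Lhs x j = x$j*(1 - th$j*x$j)/(1 - th$j)"
definition SL :: "real^'n \<Rightarrow> real" where "SL x = (\<Sum>i\<in>UNIV-{l}. (1-x$i)*th$i*(x$i/(1-th$i)))"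
definition Rhs :: "real^'n \<Rightarrow> 'n \<Rightarrow> real" where
  "Rhs x j = (if j = l then SL x else (1-x$l)*C$l$j*th$l*(x$l/(1-th$l)))"

lemma Mm_yv: "(Mm x *v yv x)$j = Lhs x j - Rhs x j"
proof -
  have "(Mm x *v yv x)$j = x$j/(1-th$j) - (x$j*th$j*(x$j/(1-th$j)) + Rhs x j)"
    unfolding Mm_def Mv_entry sumW by (simp add: yv_def Rhs_def SL_def)
  moreover have "x$j/(1-th$j) - x$j*th$j*(x$j/(1-th$j)) = Lhs x j"
  proof -
    have "x$j*th$j*(x$j/(1-th$j)) = (x$j*th$j*x$j)/(1-th$j)" by simp
    then have "x$j/(1-th$j) - x$j*th$j*(x$j/(1-th$j)) = (x$j - x$j*th$j*x$j)/(1-th$j)"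
      by (simp add: diff_divide_distrib)
    also have "x$j - x$j*th$j*x$j = x$j*(1 - th$j*x$j)" by (simp add: algebra_simps)
    finally show ?thesis by (simp add: Lhs_def)
  qed
  ultimately show ?thesis by simp
qed

lemma cvec_entry: "cvec $ j = 1 / real CARD('n)"
  by (simp add: cvec_def onesn_def)

lemma E_iff: "Mm x *v yv x = cvec \<longleftrightarrow> (\<forall>j. Lhs x j = 1 / real CARD('n) + Rhs x j)"
  unfolding vec_eq_iff Mm_yv cvec_entry by (auto simp: algebra_simps)

lemma A_to_E: assumes "equilibrium_A th C x" shows "Mm x *v yv x = cvec"
proof -
  have p: "prob_simplex x" and F: "Fmap th C x = x" using assms by (auto simp: equilibrium_A_def)
  note inv = matrix_inv_props[OF Mm_invertible[OF simplex_01[OF p]]]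
  define z where "z = matrix_inv (Mm x) *v cvec"
  have "x = (mat 1 - diagm th) *v z" using F by (simp add: Fmap_eq z_def matrix_vector_mul_assoc)
  then have "x$j = (1 - th$j) * z$j" for j by (simp add: IminusD_vec)
  then have "z$j = x$j / (1 - th$j)" for j using th_ne1[of j] by (simp add: eq_divide_eq)
  then have "z = yv x" by (simp add: yv_def vec_eq_iff)
  moreover have "Mm x *v z = cvec" using inv by (simp add: z_def matrix_vector_mul_assoc)
  ultimately show ?thesis by simp
qed

lemma E_to_A: assumes p: "prob_simplex x" and E: "Mm x *v yv x = cvec" shows "equilibrium_A th C x"
proof -
  note inv = matrix_inv_props[OF Mm_invertible[OF simplex_01[OF p]]]
  have "Fmap th C x = (mat 1 - diagm th) *v (matrix_inv (Mm x) *v (Mm x *v yv x))"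
    by (simp add: Fmap_eq E matrix_vector_mul_assoc)
  also have "\<dots> = (mat 1 - diagm th) *v yv x" using inv by (simp add: matrix_vector_mul_assoc)
  also have "\<dots> = x" by (simp add: vec_eq_iff IminusD_vec yv_def th_ne1)
  finally show ?thesis using p by (simp add: equilibrium_A_def)
qed


lemma NN2: "2 \<le> real CARD('n)" using n2 by simp

lemma Lhs_eq: assumes "Lhs x i = c" shows "th$i*(x$i)^2 - x$i + (1-th$i)*c = 0"
proof -
  have "x$i*(1 - th$i*x$i) = c*(1-th$i)" using assms th_ne1[of i] by (simp add: Lhs_def divide_eq_eq)
  then show ?thesis by (simp add: power2_eq_square algebra_simps)
qed

lemma Rhs_nonneg: assumes x01: "\<forall>i. 0 \<le> x$i \<and> x$i \<le> 1" shows "0 \<le> Rhs x j"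
proof -
  have t: "0 \<le> (1-x$i)*th$i*(x$i/(1-th$i))" for i
    using x01 th_ge0[of i] th_lt1[of i] by simp
  have "0 \<le> SL x" unfolding SL_def by (rule sum_nonneg) (use t in auto)
  moreover have "0 \<le> (1-x$l)*C$l$j*th$l*(x$l/(1-th$l))" using t[of l] C_nonneg[of l j]
    by (metis (no_types, lifting) mult.commute mult.left_commute mult_nonneg_nonneg)
  ultimately show ?thesis by (simp add: Rhs_def)
qed

lemma exists_other: "\<exists>k. k \<noteq> (j::'n)"
proof (rule ccontr)
  assume "\<not> ?thesis"
  then have "(UNIV::'n set) = {j}" by auto
  then have "CARD('n) = 1" by (metis card.empty card_insert_disjoint empty_iff finite.emptyI One_nat_def)
  then show False using n2 by simp
qed

lemma eqA_i:
  assumes eqA: "equilibrium_A th C x"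
  shows "int_prob_simplex x \<and> (\<forall>i. th$i = 0 \<longrightarrow> (C$l$i = 0 \<longrightarrow> x$i = 1/real CARD('n)) \<and> (C$l$i \<noteq> 0 \<longrightarrow> x$i > 1/real CARD('n)))
     \<and> (\<forall>i. 0 < th$i \<and> i \<noteq> l \<and> C$l$i = 0 \<longrightarrow> x$i = powval (real CARD('n)) 1 (th$i))"
proof -
  have p: "prob_simplex x" using eqA by (simp add: equilibrium_A_def)
  note x01 = simplex_01[OF p]
  have E: "\<And>j. Lhs x j = 1/real CARD('n) + Rhs x j" using A_to_E[OF eqA] by (simp add: E_iff)
  have N0: "0 < 1/real CARD('n)" using NN2 by simp
  have pos: "0 < x$j" for j
  proof (rule ccontr)
    assume "\<not> 0 < x$j"
    then have "x$j = 0" using x01 by (meson antisym not_less)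
    then have "Lhs x j = 0" by (simp add: Lhs_def)
    then show False using E[of j] Rhs_nonneg[OF x01, of j] N0 by linarith
  qed
  have ips: "int_prob_simplex x" using pos p by (simp add: int_prob_simplex_def prob_simplex_def)
  obtain k where k: "k \<noteq> l" using exists_other by blast
  have "x$l + x$k = (\<Sum>i\<in>{l,k}. x$i)" using k by simp
  also have "\<dots> \<le> (\<Sum>i\<in>UNIV. x$i)" using x01 by (intro sum_mono2) auto
  also have "\<dots> = 1" using p by (simp add: prob_simplex_def)
  finally have xl1: "x$l < 1" using pos[of k] by simp
  define a where "a = (1-x$l)*th$l*(x$l/(1-th$l))"
  have a0: "0 < a" unfolding a_def using xl1 pos[of l] thl th_lt1[of l] by simp
  have Vf: "(C$l$i = 0 \<longrightarrow> x$i = 1/real CARD('n)) \<and> (C$l$i \<noteq> 0 \<longrightarrow> x$i > 1/real CARD('n))" if t0: "th$i = 0" for i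
  proof -
    have il: "i \<noteq> l" using t0 thl by auto
    have "Lhs x i = x$i" using t0 by (simp add: Lhs_def)
    moreover have "Rhs x i = C$l$i * a" using il by (simp add: Rhs_def a_def)
    ultimately have xi: "x$i = 1/real CARD('n) + C$l$i * a" using E[of i] by simp
    show ?thesis
    proof (intro conjI impI)
      show "C$l$i = 0 \<Longrightarrow> x$i = 1/real CARD('n)" using xi by simp
      assume "C$l$i \<noteq> 0"
      then have "0 < C$l$i" using C_nonneg[of l i] by simp
      then show "x$i > 1/real CARD('n)" using xi a0 by simp
    qed
  qed
  have Vp: "x$i = powval (real CARD('n)) 1 (th$i)" if h: "0 < th$i" "i \<noteq> l" "C$l$i = 0" for i
  proof -
    have "Rhs x i = 0" using h by (simp add: Rhs_def)
    then have "Lhs x i = 1/real CARD('n)" using E[of i] by simp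
    from Lhs_eq[OF this] have "th$i*(x$i)^2 - x$i + (1-th$i)*1/real CARD('n) = 0" by simp
    then show ?thesis using h th_lt1[of i] NN2 x01 by (intro root_powval) auto
  qed
  show ?thesis using ips Vf Vp by blast
qed

definition Vp :: "'n set" where "Vp = {i. 0 < th$i}"
definition Vf :: "'n set" where "Vf = {i. th$i = 0}"

lemma Vf_eq: "Vf = UNIV - Vp" using thr by (auto simp: Vf_def Vp_def less_le)
lemma l_Vp: "l \<in> Vp" using thl by (simp add: Vp_def)
lemma card_VfVp: "real (card Vf) = real CARD('n) - real (card Vp)"
proof -
  have "card Vf = CARD('n) - card Vp" unfolding Vf_eq by (simp add: card_Diff_subset)
  moreover have "card Vp \<le> CARD('n)" by (simp add: card_mono)
  ultimately show ?thesis by simp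
qed
lemma card_Vpl: "real (card (Vp - {l})) = real (card Vp) - 1"
proof -
  have "card Vp \<ge> 1" using l_Vp by (metis One_nat_def Suc_leI card_gt_0_iff empty_iff finite)
  then show ?thesis using l_Vp by (simp add: of_nat_diff)
qed

lemma sum_C_Vf: assumes H: "\<forall>i. 0 < th$i \<and> i \<noteq> l \<longrightarrow> C$l$i = 0"
  shows "(\<Sum>i\<in>Vf. C$l$i) = 1"
proof -
  have "(\<Sum>i\<in>UNIV. C$l$i) = (\<Sum>i\<in>Vp. C$l$i) + (\<Sum>i\<in>UNIV - Vp. C$l$i)"
    by (simp add: sum.subset_diff[of Vp UNIV])
  moreover have "(\<Sum>i\<in>Vp. C$l$i) = 0" using H Cd by (intro sum.neutral) (auto simp: Vp_def)
  ultimately show ?thesis using C_rowsum[of l] by (simp add: Vf_eq)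
qed

lemma card_Vf1: assumes H: "\<forall>i. 0 < th$i \<and> i \<noteq> l \<longrightarrow> C$l$i = 0"
  shows "1 \<le> real (card Vf)"
proof -
  have "Vf \<noteq> {}" using sum_C_Vf[OF H] by auto
  then have "card Vf \<ge> 1" by (metis One_nat_def Suc_leI card_gt_0_iff finite)
  then show ?thesis by simp
qed

lemma SL_eq: assumes q: "\<forall>i\<in>Vp-{l}. th$i*(x$i)^2 - x$i + (1-th$i)*(1/real CARD('n)) = 0"
  shows "SL x = real (card (Vp-{l})) / real CARD('n) - (\<Sum>i\<in>Vp-{l}. x$i)"
proof -
  define f where "f i = (1-x$i)*th$i*(x$i/(1-th$i))" for i
  have "SL x = sum f (UNIV-{l})" by (simp add: SL_def f_def)
  also have "\<dots> = sum f (Vp-{l})"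
  proof (rule sum.mono_neutral_right)
    show "\<forall>i\<in>UNIV - {l} - (Vp - {l}). f i = 0"
    proof
      fix i assume "i \<in> UNIV - {l} - (Vp - {l})"
      then have "th$i = 0" using th_ge0[of i] by (auto simp: Vp_def)
      then show "f i = 0" by (simp add: f_def)
    qed
  qed auto
  also have "\<dots> = (\<Sum>i\<in>Vp-{l}. 1/real CARD('n) - x$i)"
  proof (rule sum.cong)
    fix i assume i: "i \<in> Vp-{l}"
    have "(1-x$i)*th$i*x$i = (1-th$i)*(1/real CARD('n) - x$i)"
      using q i by (simp add: power2_eq_square algebra_simps)
    then show "f i = 1/real CARD('n) - x$i" using th_ne1[of i] by (simp add: f_def divide_eq_eq)
  qed simp
  also have "\<dots> = real (card (Vp-{l})) / real CARD('n) - (\<Sum>i\<in>Vp-{l}. x$i)"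
    by (simp add: sum_subtractf)
  finally show ?thesis .
qed

lemma eqA_ii:
  assumes H: "\<forall>i. 0 < th$i \<and> i \<noteq> l \<longrightarrow> C$l$i = 0" and eqA: "equilibrium_A th C x"
  defines "xi \<equiv> real CARD('n) - real (card Vf) - real CARD('n) * (\<Sum>j\<in>Vp-{l}. x$j)"
  shows "x$l = powval (real CARD('n)) xi (th$l) \<and> (\<forall>i\<in>Vf. x$i = 1/real CARD('n) + (xi/real CARD('n) - x$l)*C$l$i)"
proof -
  have p: "prob_simplex x" using eqA by (simp add: equilibrium_A_def)
  note x01 = simplex_01[OF p]
  have E: "\<And>j. Lhs x j = 1/real CARD('n) + Rhs x j" using A_to_E[OF eqA] by (simp add: E_iff)
  have N0: "0 < real CARD('n)" using NN2 by simp
  have q: "\<forall>i\<in>Vp-{l}. th$i*(x$i)^2 - x$i + (1-th$i)*(1/real CARD('n)) = 0"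
  proof
    fix i assume i: "i \<in> Vp-{l}"
    then have "Rhs x i = 0" using H by (simp add: Rhs_def Vp_def)
    then have "Lhs x i = 1/real CARD('n)" using E[of i] by simp
    from Lhs_eq[OF this] show "th$i*(x$i)^2 - x$i + (1-th$i)*(1/real CARD('n)) = 0" .
  qed
  define S where "S = (\<Sum>j\<in>Vp-{l}. x$j)"
  have S0: "0 \<le> S" unfolding S_def using x01 by (intro sum_nonneg) auto
  have "Lhs x l = 1/real CARD('n) + SL x" using E[of l] by (simp add: Rhs_def)
  also have "\<dots> = xi / real CARD('n)"
    using SL_eq[OF q] card_Vpl card_VfVp N0 by (simp add: xi_def S_def[symmetric] field_simps)
  finally have Ll: "Lhs x l = xi / real CARD('n)" .
  from Lhs_eq[OF Ll] have ql: "th$l*(x$l)^2 - x$l + (1-th$l)*xi/real CARD('n) = 0" by simp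
  have xin: "xi < real CARD('n)"
  proof -
    have "0 \<le> real CARD('n) * S" using S0 N0 by simp
    then show ?thesis using card_Vf1[OF H] by (simp add: xi_def S_def)
  qed
  have xl: "x$l = powval (real CARD('n)) xi (th$l)"
    using thl th_lt1[of l] N0 x01 xin ql by (intro root_powval) auto
  define a where "a = (1-x$l)*th$l*(x$l/(1-th$l))"
  have aeq: "xi/real CARD('n) - x$l = a"
  proof -
    have "Lhs x l - x$l = a" using th_ne1[of l] by (simp add: Lhs_def a_def field_simps)
    then show ?thesis using Ll by simp
  qed
  have "x$i = 1/real CARD('n) + (xi/real CARD('n) - x$l)*C$l$i" if i: "i \<in> Vf" for i
  proof -
    have t0: "th$i = 0" using i by (simp add: Vf_def)
    have il: "i \<noteq> l" using t0 thl by auto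
    have "Lhs x i = x$i" using t0 by (simp add: Lhs_def)
    moreover have "Rhs x i = C$l$i * a" using il by (simp add: Rhs_def a_def)
    ultimately show ?thesis using E[of i] aeq by (simp add: mult.commute)
  qed
  with xl show ?thesis by blast
qed

lemma V_entry: "(diagm th ** Wmat C x ** V + (mat 1 - diagm th)) $ i $ j
   = th$i * (\<Sum>k\<in>UNIV. Wmat C x $i$k * V$k$j) + (if i = j then 1 - th$i else 0)"
proof -
  have "diagm th ** Wmat C x ** V = diagm th ** (Wmat C x ** V)" by (simp add: matrix_mul_assoc)
  then have "(diagm th ** Wmat C x ** V) $ i $ j = th$i * (Wmat C x ** V) $ i $ j" by (simp add: diagm_mul)
  also have "(Wmat C x ** V) $ i $ j = (\<Sum>k\<in>UNIV. Wmat C x $i$k * V$k$j)" by (simp add: matrix_matrix_mult_def)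
  finally show ?thesis by (simp add: mat1_entry diagm_def)
qed

lemma B_exists: assumes eqA: "equilibrium_A th C x" shows "\<exists>V. equilibrium_B th C V x"
proof -
  have p: "prob_simplex x" using eqA by (simp add: equilibrium_A_def)
  note x01 = simplex_01[OF p]
  note inv = matrix_inv_props[OF Am_invertible[OF x01]]
  define V where "V = matrix_inv (Am x) ** (mat 1 - diagm th)"
  have AV: "Am x ** V = mat 1 - diagm th" using inv by (simp add: V_def matrix_mul_assoc)
  have "Am x ** V = V - diagm th ** Wmat C x ** V"
    by (simp add: Am_def mat_diff_mul matrix_mul_assoc)
  with AV have "V - diagm th ** Wmat C x ** V = mat 1 - diagm th" by simp
  then have Veq: "V = diagm th ** Wmat C x ** V + (mat 1 - diagm th)"
    by (metis add.commute diff_eq_eq)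
  have "transpose V *v cvec = Fmap th C x" using key_V[OF x01 AV] by (simp only: Fmap_eq)
  then have xeq: "x = transpose V *v ((1 / real CARD('n)) *\<^sub>R onesn)"
    using eqA by (simp add: equilibrium_A_def cvec_def)
  have "Am x *v onesn = (mat 1 - diagm th) *v onesn"
    by (simp add: vec_eq_iff Am_vec IminusD_vec onesn_def W_rowsum)
  then have "V *v onesn = matrix_inv (Am x) *v (Am x *v onesn)"
    by (simp add: V_def matrix_vector_mul_assoc[symmetric])
  also have "\<dots> = onesn" using inv by (simp add: matrix_vector_mul_assoc)
  finally have "V *v onesn = onesn" .
  then have rs: "(\<Sum>j\<in>UNIV. V$i$j) = 1" for i
    by (simp add: vec_eq_iff matrix_vector_mult_def onesn_def)
  have nn: "0 \<le> V$i$j" for i j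
  proof -
    define f where "f k = V$k$j" for k
    have "Min (range f) \<in> range f" by (rule Min_in) auto
    then obtain i0 where i0: "f i0 = Min (range f)" by (metis rangeE)
    have mn: "f i0 \<le> f k" for k using i0 by (simp add: Min_le)
    have "f i0 = th$i0 * (\<Sum>k\<in>UNIV. Wmat C x $i0$k * f k) + (if i0 = j then 1 - th$i0 else 0)"
      unfolding f_def by (subst Veq) (simp only: V_entry)
    moreover have "(\<Sum>k\<in>UNIV. Wmat C x $i0$k * f i0) \<le> (\<Sum>k\<in>UNIV. Wmat C x $i0$k * f k)"
      by (rule sum_mono) (simp add: mult_left_mono mn W_nonneg[OF x01])
    moreover have "(\<Sum>k\<in>UNIV. Wmat C x $i0$k * f i0) = f i0"
      by (simp add: sum_distrib_right[symmetric] W_rowsum)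
    moreover have "0 \<le> (if i0 = j then 1 - th$i0 else 0)" using th_lt1[of i0] by auto
    ultimately have "th$i0 * f i0 \<le> f i0" using th_ge0[of i0]
      by (smt (verit, best) mult_left_mono)
    then have "0 \<le> (1 - th$i0) * f i0" by (simp add: algebra_simps)
    then have "0 \<le> f i0" using th_lt1[of i0] by (simp add: zero_le_mult_iff)
    then show ?thesis using mn[of i] by (simp add: f_def)
  qed
  have "row_stochastic V" using nn rs by (simp add: row_stochastic_def)
  then show ?thesis using p Veq xeq by (auto simp: equilibrium_B_def)
qed

lemma Lhs_of_eq: assumes "th$i*(x$i)^2 - x$i + (1-th$i)*c = 0" shows "Lhs x i = c"
proof -
  have "x$i*(1 - th$i*x$i) = c*(1-th$i)" using assms by (simp add: power2_eq_square algebra_simps)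
  then show ?thesis using th_ne1[of i] by (simp add: Lhs_def divide_eq_eq)
qed

lemma A_exists: assumes H: "\<forall>i. 0 < th$i \<and> i \<noteq> l \<longrightarrow> C$l$i = 0"
  shows "\<exists>x. equilibrium_A th C x"
proof -
  define N where "N = real CARD('n)"
  have N2: "2 \<le> N" using NN2 by (simp add: N_def)
  define P where "P i = powval N 1 (th$i)" for i
  have Pp: "th$i*(P i)^2 - P i + (1-th$i)*(1/N) = 0 \<and> 0 \<le> P i \<and> P i \<le> 1/N" if i: "i \<in> Vp" for i
  proof -
    have ti: "0 < th$i" "th$i < 1" using i th_lt1[of i] by (auto simp: Vp_def)
    have pr: "th$i*(P i)^2 - P i + (1-th$i)*1/N = 0" "0 \<le> P i" "P i \<le> 1"
      using powval_props[of "th$i" N 1] ti N2 by (auto simp: P_def)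
    have idp: "P i*(1 - th$i*P i) = P i - th$i*(P i)^2" by (simp add: power2_eq_square algebra_simps)
    have "(1-th$i)*1/N = (1-th$i)*(1/N)" by simp
    then have e1: "P i*(1 - th$i*P i) = (1-th$i)*(1/N)" using pr(1) idp by linarith
    have "1 - th$i \<le> 1 - th$i*P i" using pr(3) ti by (simp add: mult_left_le)
    then have "P i*(1-th$i) \<le> P i*(1 - th$i*P i)" using pr(2) by (rule mult_left_mono)
    also have "\<dots> = (1/N)*(1-th$i)" using e1 by (simp only: mult.commute)
    finally have "P i*(1-th$i) \<le> (1/N)*(1-th$i)" .
    then have "P i \<le> 1/N" by (rule mult_right_le_imp_le) (use ti in simp)
    then show ?thesis using pr by simp
  qed
  define S0 where "S0 = (\<Sum>i\<in>Vp-{l}. P i)"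
  have S00: "0 \<le> S0" unfolding S0_def using Pp by (intro sum_nonneg) auto
  have S0le: "S0 \<le> real (card (Vp-{l})) / N"
  proof -
    have "S0 \<le> (\<Sum>i\<in>Vp-{l}. 1/N)" unfolding S0_def using Pp by (intro sum_mono) auto
    then show ?thesis by simp
  qed
  define r where "r = real (card Vf)"
  have r1: "1 \<le> r" using card_Vf1[OF H] by (simp add: r_def)
  have rN: "r = N - real (card Vp)" using card_VfVp by (simp add: r_def N_def)
  define xi where "xi = N - r - N*S0"
  have xi1: "1 \<le> xi"
  proof -
    have "N*S0 \<le> real (card (Vp-{l}))" using S0le N2 by (simp add: field_simps)
    then show ?thesis using card_Vpl rN by (simp add: xi_def)
  qed
  have xiN: "xi \<le> N - 1"
  proof -
    have "0 \<le> N*S0" using S00 N2 by simp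
    then show ?thesis using r1 by (simp add: xi_def)
  qed
  define X where "X = powval N xi (th$l)"
  have Xp: "th$l*X^2 - X + (1-th$l)*xi/N = 0" "0 \<le> X" "X \<le> 1"
    using powval_props[of "th$l" N xi] thl th_lt1[of l] N2 xi1 xiN by (auto simp: X_def)
  define a0 where "a0 = xi/N - X"
  have a0eq: "a0 = (1-X)*th$l*(X/(1-th$l))"
  proof -
    have idp: "X*(1 - th$l*X) = X - th$l*X^2" by (simp add: power2_eq_square algebra_simps)
    have "(1-th$l)*xi/N = (1-th$l)*(xi/N)" by simp
    then have "X*(1 - th$l*X) = (1-th$l)*(xi/N)" using Xp(1) idp by linarith
    then have "X*(1 - th$l*X)/(1-th$l) = (1-th$l)*(xi/N)/(1-th$l)" by (rule arg_cong)
    also have "\<dots> = xi/N" using th_ne1(1)[of l] by (rule nonzero_mult_div_cancel_left)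
    finally have "xi/N = X*(1 - th$l*X)/(1-th$l)" by (rule sym)
    then show ?thesis using th_ne1[of l] by (simp add: a0_def field_simps)
  qed
  have a00: "0 \<le> a0" unfolding a0eq using Xp thl th_lt1[of l] by simp
  define x where "x = (\<chi> i. if i = l then X else if 0 < th$i then P i else 1/N + a0*C$l$i)"
  have xl: "x$l = X" by (simp add: x_def)
  have xVp: "x$i = P i" if "i \<in> Vp-{l}" for i using that by (simp add: x_def Vp_def)
  have xVf: "x$i = 1/N + a0*C$l$i" if "i \<in> Vf" for i
  proof -
    have "th$i = 0" using that by (simp add: Vf_def)
    moreover then have "i \<noteq> l" using thl by auto
    ultimately show ?thesis by (simp add: x_def)
  qed
  have Vfl: "(UNIV - {l}) - (Vp - {l}) = Vf" using l_Vp unfolding Vf_eq by blast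
  have "(\<Sum>i\<in>UNIV. x$i) = x$l + (\<Sum>i\<in>UNIV-{l}. x$i)" by (simp add: sum.remove)
  also have "(\<Sum>i\<in>UNIV-{l}. x$i) = (\<Sum>i\<in>(UNIV-{l})-(Vp-{l}). x$i) + (\<Sum>i\<in>Vp-{l}. x$i)"
    by (rule sum.subset_diff) auto
  also have "(\<Sum>i\<in>(UNIV-{l})-(Vp-{l}). x$i) = (\<Sum>i\<in>Vf. x$i)" by (simp only: Vfl)
  also have "(\<Sum>i\<in>Vp-{l}. x$i) = S0" unfolding S0_def by (rule sum.cong) (simp_all add: xVp)
  also have "(\<Sum>i\<in>Vf. x$i) = (\<Sum>i\<in>Vf. 1/N + a0*C$l$i)" by (rule sum.cong) (simp_all add: xVf)
  also have "\<dots> = (\<Sum>i\<in>Vf. 1/N) + a0 * (\<Sum>i\<in>Vf. C$l$i)" by (simp only: sum.distrib sum_distrib_left)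
  also have "\<dots> = r/N + a0" using sum_C_Vf[OF H] by (simp add: r_def)
  finally have "(\<Sum>i\<in>UNIV. x$i) = X + (r/N + a0 + S0)" by (simp add: xl)
  also have "\<dots> = r/N + xi/N + S0" by (simp add: a0_def)
  also have "\<dots> = 1" using N2 by (simp add: xi_def add_divide_distrib[symmetric]) (simp add: diff_divide_distrib)
  finally have sum1: "(\<Sum>i\<in>UNIV. x$i) = 1" .
  have xnn: "0 \<le> x$i" for i
  proof -
    consider "i = l" | "i \<in> Vp-{l}" | "i \<in> Vf" using Vf_eq by blast
    then show ?thesis
    proof cases
      case 1 then show ?thesis using Xp xl by simp
    next
      case 2 then show ?thesis using Pp xVp by auto
    next
      case 3 then show ?thesis using xVf[OF 3] a00 C_nonneg[of l i] N2 by simp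
    qed
  qed
  have p: "prob_simplex x" using xnn sum1 by (simp add: prob_simplex_def)
  have qx: "\<forall>i\<in>Vp-{l}. th$i*(x$i)^2 - x$i + (1-th$i)*(1/real CARD('n)) = 0"
    using Pp xVp by (simp add: N_def)
  have E: "Lhs x j = 1/N + Rhs x j" for j
  proof -
    consider "j = l" | "j \<in> Vp-{l}" | "j \<in> Vf" using Vf_eq by blast
    then show ?thesis
    proof cases
      case 1
      have "Lhs x l = xi/N" using Xp(1) xl by (intro Lhs_of_eq) simp
      moreover have "Rhs x l = real (card (Vp-{l}))/N - S0"
        using SL_eq[OF qx] xVp by (simp add: Rhs_def N_def S0_def)
      ultimately show ?thesis using 1 card_Vpl rN N2 by (simp add: xi_def field_simps)
    next
      case 2
      have "Lhs x j = 1/N" using Pp[of j] xVp[OF 2] 2 by (intro Lhs_of_eq) simp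
      moreover have "Rhs x j = 0" using 2 H by (simp add: Rhs_def Vp_def)
      ultimately show ?thesis by simp
    next
      case 3
      have t0: "th$j = 0" using 3 by (simp add: Vf_def)
      have jl: "j \<noteq> l" using t0 thl by auto
      have "Lhs x j = x$j" using t0 by (simp add: Lhs_def)
      moreover have "Rhs x j = a0 * C$l$j" using jl xl by (simp add: Rhs_def a0eq)
      ultimately show ?thesis using xVf[OF 3] by simp
    qed
  qed
  have "Mm x *v yv x = cvec" unfolding E_iff using E by (simp add: N_def)
  then show ?thesis using E_to_A[OF p] by blast
qed

lemma uniq: assumes H: "\<forall>i. 0 < th$i \<and> i \<noteq> l \<longrightarrow> C$l$i = 0"
  and ex: "equilibrium_A th C x" and ey: "equilibrium_A th C y"
  shows "x = y"
proof -
  have pv: "z$i = powval (real CARD('n)) 1 (th$i)" if "equilibrium_A th C z" "i \<in> Vp-{l}" for z i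
    using eqA_i[OF that(1)] that(2) H by (auto simp: Vp_def)
  have eqp: "x$i = y$i" if "i \<in> Vp-{l}" for i using pv[OF ex that] pv[OF ey that] by simp
  have "(\<Sum>j\<in>Vp-{l}. x$j) = (\<Sum>j\<in>Vp-{l}. y$j)" by (rule sum.cong) (simp_all add: eqp)
  then have cx: "x$l = y$l \<and> (\<forall>i\<in>Vf. x$i = y$i)"
    using eqA_ii[OF H ex] eqA_ii[OF H ey] by auto
  have "x$i = y$i" for i
  proof -
    consider "i = l" | "i \<in> Vp-{l}" | "i \<in> Vf" using Vf_eq by blast
    then show ?thesis using cx eqp by cases auto
  qed
  then show ?thesis by (simp add: vec_eq_iff)
qed

end

theorem theorem3:
  fixes \<theta> :: "real^'n" and C :: "real^'n^'n" and l :: 'n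
  defines "n \<equiv> real CARD('n)"
  defines "Vf \<equiv> {i. \<theta>$i = 0}"
  defines "Vp \<equiv> {i. \<theta>$i > 0}"
  assumes n2: "CARD('n) \<ge> 2"
    and C_stoch: "row_stochastic C"
    and C_diag: "\<forall>i. C$i$i = 0"
    and theta_range: "\<forall>i. 0 \<le> \<theta>$i \<and> \<theta>$i < 1"
    and theta_pos: "\<exists>j. \<theta>$j > 0"
    and star: "star_topology C l"
    and theta_l: "0 < \<theta>$l \<and> \<theta>$l < 1"
  shows
    "(\<forall>x. (equilibrium_A \<theta> C x \<or> (\<exists>V. equilibrium_B \<theta> C V x)) \<longrightarrow>
        int_prob_simplex x
      \<and> (\<forall>i\<in>Vf. (C$l$i = 0 \<longrightarrow> x$i = 1 / n) \<and> (C$l$i \<noteq> 0 \<longrightarrow> x$i > 1 / n))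
      \<and> (\<forall>i\<in>Vp - {l}. C$l$i = 0 \<longrightarrow> x$i = powval n 1 (\<theta>$i)))
   \<and> (\<forall>a b. 0 < a \<and> a < b \<and> b < 1 \<longrightarrow> powval n 1 b < powval n 1 a)
   \<and> ((\<forall>i\<in>Vp - {l}. C$l$i = 0) \<longrightarrow>
       (\<exists>x. equilibrium_A \<theta> C x \<and> (\<exists>V. equilibrium_B \<theta> C V x)
          \<and> (\<forall>y. (equilibrium_A \<theta> C y \<or> (\<exists>V. equilibrium_B \<theta> C V y)) \<longrightarrow> y = x)
          \<and> (let r = real (card Vf);
                 \<xi> = n - r - n * (\<Sum>j\<in>Vp - {l}. x$j)
             in (\<forall>i\<in>Vp - {l}. x$i = powval n 1 (\<theta>$i))
              \<and> x$l = powval n \<xi> (\<theta>$l)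
              \<and> (\<forall>i\<in>Vf. x$i = 1 / n + (\<xi> / n - x$l) * C$l$i))))"
proof -
  interpret S: starsys \<theta> C l
    using n2 C_stoch C_diag theta_range star theta_l by unfold_locales auto
  have toA: "equilibrium_A \<theta> C x" if "equilibrium_A \<theta> C x \<or> (\<exists>V. equilibrium_B \<theta> C V x)" for x
    using that S.B_to_A by blast
  have VfS: "Vf = S.Vf" by (simp add: Vf_def S.Vf_def)
  have VpS: "Vp = S.Vp" by (simp add: Vp_def S.Vp_def)
  have P1: "\<forall>x. (equilibrium_A \<theta> C x \<or> (\<exists>V. equilibrium_B \<theta> C V x)) \<longrightarrow>
        int_prob_simplex x
      \<and> (\<forall>i\<in>Vf. (C$l$i = 0 \<longrightarrow> x$i = 1 / n) \<and> (C$l$i \<noteq> 0 \<longrightarrow> x$i > 1 / n))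
      \<and> (\<forall>i\<in>Vp - {l}. C$l$i = 0 \<longrightarrow> x$i = powval n 1 (\<theta>$i))"
  proof (intro allI impI)
    fix x assume "equilibrium_A \<theta> C x \<or> (\<exists>V. equilibrium_B \<theta> C V x)"
    then have eq: "equilibrium_A \<theta> C x" by (rule toA)
    from S.eqA_i[OF eq] show "int_prob_simplex x
      \<and> (\<forall>i\<in>Vf. (C$l$i = 0 \<longrightarrow> x$i = 1 / n) \<and> (C$l$i \<noteq> 0 \<longrightarrow> x$i > 1 / n))
      \<and> (\<forall>i\<in>Vp - {l}. C$l$i = 0 \<longrightarrow> x$i = powval n 1 (\<theta>$i))"
      unfolding Vf_def Vp_def n_def by auto
  qed
  have P2: "\<forall>a b. 0 < a \<and> a < b \<and> b < 1 \<longrightarrow> powval n 1 b < powval n 1 a"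
    using powval_mono[of n] n2 unfolding n_def by auto
  have P3: "(\<forall>i\<in>Vp - {l}. C$l$i = 0) \<longrightarrow>
       (\<exists>x. equilibrium_A \<theta> C x \<and> (\<exists>V. equilibrium_B \<theta> C V x)
          \<and> (\<forall>y. (equilibrium_A \<theta> C y \<or> (\<exists>V. equilibrium_B \<theta> C V y)) \<longrightarrow> y = x)
          \<and> (let r = real (card Vf);
                 \<xi> = n - r - n * (\<Sum>j\<in>Vp - {l}. x$j)
             in (\<forall>i\<in>Vp - {l}. x$i = powval n 1 (\<theta>$i))
              \<and> x$l = powval n \<xi> (\<theta>$l)
              \<and> (\<forall>i\<in>Vf. x$i = 1 / n + (\<xi> / n - x$l) * C$l$i)))"
  proof
    assume H0: "\<forall>i\<in>Vp - {l}. C$l$i = 0"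
    have H: "\<forall>i. 0 < \<theta>$i \<and> i \<noteq> l \<longrightarrow> C$l$i = 0" using H0 by (auto simp: Vp_def)
    obtain x where ex: "equilibrium_A \<theta> C x" using S.A_exists[OF H] by blast
    have uq: "\<forall>y. (equilibrium_A \<theta> C y \<or> (\<exists>V. equilibrium_B \<theta> C V y)) \<longrightarrow> y = x"
      using S.uniq[OF H ex] toA by blast
    have a: "\<forall>i\<in>Vp - {l}. x$i = powval n 1 (\<theta>$i)"
      using S.eqA_i[OF ex] H0 unfolding Vp_def n_def by auto
    have b: "let r = real (card Vf);
                 \<xi> = n - r - n * (\<Sum>j\<in>Vp - {l}. x$j)
             in x$l = powval n \<xi> (\<theta>$l)
              \<and> (\<forall>i\<in>Vf. x$i = 1 / n + (\<xi> / n - x$l) * C$l$i)"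
      using S.eqA_ii[OF H ex] unfolding VfS VpS n_def Let_def by blast
    show "\<exists>x. equilibrium_A \<theta> C x \<and> (\<exists>V. equilibrium_B \<theta> C V x)
          \<and> (\<forall>y. (equilibrium_A \<theta> C y \<or> (\<exists>V. equilibrium_B \<theta> C V y)) \<longrightarrow> y = x)
          \<and> (let r = real (card Vf);
                 \<xi> = n - r - n * (\<Sum>j\<in>Vp - {l}. x$j)
             in (\<forall>i\<in>Vp - {l}. x$i = powval n 1 (\<theta>$i))
              \<and> x$l = powval n \<xi> (\<theta>$l)
              \<and> (\<forall>i\<in>Vf. x$i = 1 / n + (\<xi> / n - x$l) * C$l$i))"
      using ex S.B_exists[OF ex] uq a b unfolding Let_def by blast
  qed
  show ?thesis using P1 P2 P3 by blast
qed

end
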